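(* For a Pólya tree $t$ with $k$ nodes let $\tilde\rho=1+\epsilon$ be the smallest positive real number satisfying $\int_0^{\tilde\rho} e^{-w(t)v^k}\,dv = 1$. Then, as $k\to\infty$ (with $t$ ranging over Pólya trees of size $k$), \[ \tilde\rho = 1+\epsilon \sim 1 + \frac{w(t)}{k}, \quad\text{i.e. } \epsilon \sim \frac{w(t)}{k}. \]
   Context: A Pólya tree is an unlabeled rooted non-plane tree. For a Pólya tree $t$ with $k$ nodes, $\ell(t)$ is the number of labelings of its nodes by $1,\dots,k$ that increase along every path from the root, and $w(t)=\ell(t)/k!$. The number $\tilde\rho$ is the dominant singularity of $S_t(z)=\ln\frac{1}{1-\int_0^z e^{-w(t)v^k}\,dv}-w(t)z^k$, the exponential generating function of recursive trees having no fringe subtree of shape $t$. *)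

theory Defs
  imports "HOL-Analysis.Analysis" "HOL-Library.Multiset"
begin

text \<open>Polya trees: unlabeled rooted non-plane trees (children form a multiset).\<close>
datatype ptree = PNode "ptree multiset"

primrec psize :: "ptree \<Rightarrow> nat" where
  "psize (PNode M) = Suc (sum_mset (image_mset psize M))"

datatype ltree = LNode nat "ltree multiset"

primrec lroot :: "ltree \<Rightarrow> nat" where
  "lroot (LNode a M) = a"

primrec shape :: "ltree \<Rightarrow> ptree" where
  "shape (LNode a M) = PNode (image_mset shape M)"

primrec labels :: "ltree \<Rightarrow> nat multiset" where
  "labels (LNode a M) = add_mset a (sum_mset (image_mset labels M))"

primrec increasing :: "ltree \<Rightarrow> bool" where
  "increasing (LNode a M) =
     (\<forall>p \<in># image_mset (\<lambda>T. (lroot T, increasing T)) M. a < fst p \<and> snd p)"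

text \<open>\<open>\<ell>(t)\<close>: the number of increasing labellings of the nodes of \<open>t\<close> by \<open>1,\<dots>,k\<close>
  (i.e. the number of recursive trees of shape \<open>t\<close>).\<close>
definition num_incr_labellings :: "ptree \<Rightarrow> nat" where
  "num_incr_labellings t =
     card {T. shape T = t \<and> increasing T \<and> labels T = mset_set {1..psize t}}"

definition w :: "ptree \<Rightarrow> real" where
  "w t = real (num_incr_labellings t) / fact (psize t)"

definition rho_tilde :: "ptree \<Rightarrow> real" where
  "rho_tilde t = Inf {r. r > 0 \<and>
      integral {0..r} (\<lambda>v. exp (- w t * v ^ psize t)) = 1}"

end

theory Submission
  imports Defs "HOL-Library.FuncSet"
begin


primrec edges :: "ltree \<Rightarrow> (nat \<times> nat) set" where
  "edges (LNode a M) = \<Union> (set_mset (image_mset (\<lambda>C. insert (a, lroot C) (edges C)) M))"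

definition ldist :: "ltree \<Rightarrow> bool" where
  "ldist T = (\<forall>x. count (labels T) x \<le> 1)"

lemma lroot_in_labels: "lroot T \<in># labels T"
  by (cases T) auto

lemma labels_split:
  assumes "C \<in># M"
  obtains M' where "M = add_mset C M'"
    "labels (LNode a M) = add_mset a (labels C + sum_mset (image_mset labels M'))"
proof -
  obtain M' where M: "M = add_mset C M'" using multi_member_split[OF assms] by blast
  have "labels (LNode a M) = add_mset a (labels C + sum_mset (image_mset labels M'))"
    unfolding M by simp
  then show ?thesis using that M by blast
qed

lemma ldist_child:
  assumes "ldist (LNode a M)" "C \<in># M"
  shows "ldist C" "a \<notin># labels C"
proof -
  obtain M' where M: "M = add_mset C M'" using multi_member_split[OF assms(2)] by blast
  have eq: "labels (LNode a M) = add_mset a (labels C + sum_mset (image_mset labels M'))"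
    unfolding M by simp
  have h0: "\<forall>x. count (labels (LNode a M)) x \<le> 1" using assms(1) unfolding ldist_def .
  have h: "count (add_mset a (labels C + sum_mset (image_mset labels M'))) x \<le> 1" for x
    using h0 unfolding eq by blast
  show "ldist C" unfolding ldist_def
  proof
    fix x
    have "count (labels C) x \<le> count (add_mset a (labels C + sum_mset (image_mset labels M'))) x" by simp
    then show "count (labels C) x \<le> 1" using h[of x] by linarith
  qed
  have "Suc (count (labels C) a) \<le> count (add_mset a (labels C + sum_mset (image_mset labels M'))) a" by simp
  then have "count (labels C) a = 0" using h[of a] by linarith
  then show "a \<notin># labels C" by (rule count_eq_zero_iff[THEN iffD1])
qed

lemma ldist_child2:
  assumes "ldist (LNode a M)" "C \<in># M" "C' \<in># M" "x \<in># labels C" "x \<in># labels C'"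
  shows "C = C'"
proof (rule ccontr)
  assume ne: "C \<noteq> C'"
  obtain M' where M: "M = add_mset C M'" using multi_member_split[OF assms(2)] by blast
  have L: "labels (LNode a M) = add_mset a (labels C + sum_mset (image_mset labels M'))"
    unfolding M by simp
  have "C' \<in># M'" using assms(3) ne M by auto
  then obtain M'' where "M' = add_mset C' M''" using multi_member_split[of C' M'] by blast
  then have "labels (LNode a M) = add_mset a (labels C + labels C' + sum_mset (image_mset labels M''))"
    using L by (simp add: add.assoc)
  moreover have "count (labels C + labels C') x \<ge> 2"
  proof -
    have "count (labels C) x > 0" "count (labels C') x > 0" using assms(4,5) by auto
    then show ?thesis unfolding count_union by linarith
  qed
  ultimately have "count (labels (LNode a M)) x \<ge> 2" by simp
  moreover have "count (labels (LNode a M)) x \<le> 1" using assms(1) unfolding ldist_def by blast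
  ultimately show False by linarith
qed

lemma ldist_child_count:
  assumes "ldist (LNode a M)"
  shows "count M C \<le> 1"
proof (rule ccontr)
  assume "\<not> count M C \<le> 1"
  then have "count M C \<ge> 2" by simp
  then obtain M' where "M = add_mset C (add_mset C M')"
  proof -
    have "count M C > 0" using \<open>count M C \<ge> 2\<close> by linarith
    then have "C \<in># M" by (rule count_greater_zero_iff[THEN iffD1])
    then obtain M1 where M1: "M = add_mset C M1" using multi_member_split[of C M] by blast
    then have "count M1 C \<ge> 1" using \<open>count M C \<ge> 2\<close> by simp
    then have "count M1 C > 0" by linarith
    then have "C \<in># M1" by (rule count_greater_zero_iff[THEN iffD1])
    then obtain M' where M': "M1 = add_mset C M'" using multi_member_split[of C M1] by blast
    have "M = add_mset C (add_mset C M')" using M1 M' by simp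
    then show ?thesis by (rule that)
  qed
  then have eq: "labels (LNode a M) = add_mset a (labels C + labels C + sum_mset (image_mset labels M'))"
    by (simp add: add.assoc)
  have ge: "count (labels C + labels C) (lroot C) \<le> count (labels (LNode a M)) (lroot C)"
    unfolding eq by simp
  have "count (labels C) (lroot C) > 0" by (rule count_greater_zero_iff[THEN iffD2, OF lroot_in_labels])
  then have "count (labels (LNode a M)) (lroot C) \<ge> 2" using ge unfolding count_union by linarith
  moreover have "count (labels (LNode a M)) (lroot C) \<le> 1" using assms(1) unfolding ldist_def by blast
  ultimately show False by linarith
qed


lemma edges_labels: "(x,y) \<in> edges T \<Longrightarrow> x \<in># labels T \<and> y \<in># labels T"
proof (induction T arbitrary: x y)
  case (LNode a M)
  obtain C where C: "C \<in># M" "(x,y) = (a, lroot C) \<or> (x,y) \<in> edges C" using LNode.prems by auto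
  then have "x \<in># labels (LNode a M) \<or> x \<in># labels C" using lroot_in_labels LNode.IH[OF C(1)] by auto
  moreover have "y \<in># labels C" using C lroot_in_labels LNode.IH[OF C(1)] by auto
  moreover have sub: "\<And>z. z \<in># labels C \<Longrightarrow> z \<in># labels (LNode a M)" using C(1) by auto
  ultimately show ?case by blast
qed

lemma edge_not_root: "ldist T \<Longrightarrow> (x,y) \<in> edges T \<Longrightarrow> y \<noteq> lroot T"
proof (cases T)
  case (LNode a M)
  assume d: "ldist T" and e: "(x,y) \<in> edges T"
  then obtain C where C: "C \<in># M" "(x,y) = (a, lroot C) \<or> (x,y) \<in> edges C" using LNode by auto
  then have "y \<in># labels C" using lroot_in_labels edges_labels by auto
  then show ?thesis using ldist_child(2)[OF d[unfolded LNode] C(1)] LNode by auto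
qed

lemma unique_parent: "ldist T \<Longrightarrow> (x,y) \<in> edges T \<Longrightarrow> (x',y) \<in> edges T \<Longrightarrow> x = x'"
proof (induction T)
  case (LNode a M)
  obtain C where C: "C \<in># M" "(x,y) = (a, lroot C) \<or> (x,y) \<in> edges C" using LNode.prems by auto
  obtain C' where C': "C' \<in># M" "(x',y) = (a, lroot C') \<or> (x',y) \<in> edges C'" using LNode.prems by auto
  have y1: "y \<in># labels C" using C lroot_in_labels edges_labels by auto
  have y2: "y \<in># labels C'" using C' lroot_in_labels edges_labels by auto
  have eq: "C = C'" using ldist_child2[OF LNode.prems(1) C(1) C'(1) y1 y2] .
  have dc: "ldist C" using ldist_child(1)[OF LNode.prems(1) C(1)] .
  show ?case
  proof (cases "(x,y) \<in> edges C")
    case True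
    then have "(x', y) \<in> edges C" using C' eq edge_not_root[OF dc True] by auto
    then show ?thesis using LNode.IH[OF C(1) dc True] by simp
  next
    case False
    then have "(x,y) = (a, lroot C)" using C by auto
    moreover have "(x',y) = (a, lroot C)"
    proof -
      have yr: "y = lroot C" using \<open>(x,y) = (a, lroot C)\<close> by simp
      have "(x',y) \<notin> edges C" using edge_not_root[OF dc, of x' y] yr by blast
      then show ?thesis using C'(2) eq yr by simp
    qed
    ultimately show ?thesis by simp
  qed
qed

lemma has_parent: "y \<in># labels T \<Longrightarrow> y \<noteq> lroot T \<Longrightarrow> \<exists>x. (x,y) \<in> edges T"
proof (induction T)
  case (LNode a M)
  have "y \<noteq> a" using LNode.prems(2) by simp
  then obtain C where C: "C \<in># M" "y \<in># labels C" using LNode.prems(1) by auto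
  show ?case
  proof (cases "y = lroot C")
    case True then show ?thesis using C by auto
  next
    case False
    then obtain x where "(x,y) \<in> edges C" using LNode.IH[OF C(1) C(2)] by blast
    then show ?thesis using C by auto
  qed
qed

lemma incr_child:
  assumes "increasing (LNode a M)" "C \<in># M"
  shows "a < lroot C" "increasing C"
proof -
  have "(lroot C, increasing C) \<in># image_mset (\<lambda>T. (lroot T, increasing T)) M" using assms(2) by simp
  then have "a < fst (lroot C, increasing C) \<and> snd (lroot C, increasing C)"
    using assms(1) unfolding increasing.simps by blast
  then show "a < lroot C" "increasing C" by simp_all
qed

lemma incr_edge: "increasing T \<Longrightarrow> (x,y) \<in> edges T \<Longrightarrow> x < y"
proof (induction T)
  case (LNode a M)
  obtain C where C: "C \<in># M" "(x,y) = (a, lroot C) \<or> (x,y) \<in> edges C" using LNode.prems(2) by auto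
  have ic: "a < lroot C" "increasing C" using incr_child[OF LNode.prems(1) C(1)] by auto
  show ?case
  proof (cases "(x,y) \<in> edges C")
    case True then show ?thesis using LNode.IH[OF C(1) ic(2) True] by simp
  next
    case False then have "(x,y) = (a, lroot C)" using C by simp
    then show ?thesis using ic by simp
  qed
qed

lemma incr_root_min: "increasing T \<Longrightarrow> y \<in># labels T \<Longrightarrow> lroot T \<le> y"
proof (induction T)
  case (LNode a M)
  show ?case
  proof (cases "y = a")
    case True then show ?thesis by simp
  next
    case False
    then obtain C where C: "C \<in># M" "y \<in># labels C" using LNode.prems(2) by auto
    have ic: "a < lroot C" "increasing C" using incr_child[OF LNode.prems(1) C(1)] by auto
    have "lroot C \<le> y" using LNode.IH[OF C(1) ic(2) C(2)] .
    then show ?thesis using ic by simp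
  qed
qed

lemma reach_sub: "(lroot T, y) \<in> (edges T)\<^sup>* \<Longrightarrow> y \<in># labels T"
  by (induction rule: rtrancl_induct) (auto simp: lroot_in_labels dest: edges_labels)

lemma reach: "ldist T \<Longrightarrow> y \<in># labels T \<Longrightarrow> (lroot T, y) \<in> (edges T)\<^sup>*"
proof (induction T arbitrary: y)
  case (LNode a M)
  show ?case
  proof (cases "y = a")
    case True then show ?thesis by simp
  next
    case False
    then obtain C where C: "C \<in># M" "y \<in># labels C" using LNode.prems by auto
    have "(lroot C, y) \<in> (edges C)\<^sup>*" using LNode.IH[OF C(1) ldist_child(1)[OF LNode.prems(1) C(1)] C(2)] .
    moreover have "edges C \<subseteq> edges (LNode a M)" using C(1) by auto
    ultimately have "(lroot C, y) \<in> (edges (LNode a M))\<^sup>*" using rtrancl_mono by blast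
    moreover have "(a, lroot C) \<in> edges (LNode a M)" using C(1) by auto
    ultimately show ?thesis by (simp add: converse_rtrancl_into_rtrancl)
  qed
qed

lemma localize:
  assumes "ldist (LNode a M)" "C \<in># M"
  shows "edges C = {e \<in> edges (LNode a M). fst e \<in># labels C}"
proof
  show "edges C \<subseteq> {e \<in> edges (LNode a M). fst e \<in># labels C}"
    using assms(2) edges_labels by fastforce
  show "{e \<in> edges (LNode a M). fst e \<in># labels C} \<subseteq> edges C"
  proof
    fix e assume e: "e \<in> {e \<in> edges (LNode a M). fst e \<in># labels C}"
    then obtain C' where C': "C' \<in># M" "e = (a, lroot C') \<or> e \<in> edges C'" by auto
    have na: "a \<notin># labels C" using ldist_child(2)[OF assms] .
    then have "e \<in> edges C'" using C' e by auto
    then have "fst e \<in># labels C'" using edges_labels[of "fst e" "snd e" C'] by simp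
    then have "C' = C" using ldist_child2[OF assms(1) C'(1) assms(2)] e by auto
    then show "e \<in> edges C" using \<open>e \<in> edges C'\<close> by simp
  qed
qed

lemma reach_child:
  assumes "ldist (LNode a M)" "C \<in># M"
  shows "{y. (lroot C, y) \<in> (edges (LNode a M))\<^sup>*} = set_mset (labels C)"
proof
  show "set_mset (labels C) \<subseteq> {y. (lroot C, y) \<in> (edges (LNode a M))\<^sup>*}"
  proof
    fix y assume "y \<in># labels C"
    then have "(lroot C, y) \<in> (edges C)\<^sup>*" using reach ldist_child(1)[OF assms] by blast
    moreover have "edges C \<subseteq> edges (LNode a M)" using assms(2) by auto
    ultimately show "y \<in> {y. (lroot C, y) \<in> (edges (LNode a M))\<^sup>*}" using rtrancl_mono by blast
  qed
  show "{y. (lroot C, y) \<in> (edges (LNode a M))\<^sup>*} \<subseteq> set_mset (labels C)"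
  proof
    fix y assume "y \<in> {y. (lroot C, y) \<in> (edges (LNode a M))\<^sup>*}"
    then have "(lroot C, y) \<in> (edges (LNode a M))\<^sup>*" by simp
    then show "y \<in># labels C"
    proof (induction rule: rtrancl_induct)
      case base then show ?case by (simp add: lroot_in_labels)
    next
      case (step y z)
      then have "(y,z) \<in> edges C" using localize[OF assms] by auto
      then show ?case using edges_labels by blast
    qed
  qed
qed

lemma tree_unique:
  "ldist T1 \<Longrightarrow> ldist T2 \<Longrightarrow> lroot T1 = lroot T2 \<Longrightarrow> edges T1 = edges T2 \<Longrightarrow> T1 = T2"
proof (induction T1 arbitrary: T2)
  case (LNode a M1)
  obtain b M2 where T2: "T2 = LNode b M2" by (cases T2)
  have ab: "b = a" using LNode.prems(3) T2 by simp
  have d1: "ldist (LNode a M1)" and d2: "ldist (LNode a M2)" using LNode.prems T2 ab by auto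
  have E: "edges (LNode a M1) = edges (LNode a M2)" using LNode.prems(4) T2 ab by simp
  have match: "\<exists>D\<in>#M2. lroot D = lroot C" if "C \<in># M1" for C
  proof -
    have "(a, lroot C) \<in> edges (LNode a M1)" using that by auto
    then have "(a, lroot C) \<in> edges (LNode a M2)" unfolding E by simp
    then obtain D where D: "D \<in># M2" "(a, lroot C) = (a, lroot D) \<or> (a, lroot C) \<in> edges D" by auto
    have "a \<notin># labels D" using ldist_child(2)[OF d2 D(1)] .
    then have "(a, lroot C) \<notin> edges D" using edges_labels by blast
    then show ?thesis using D by auto
  qed
  have match2: "\<exists>C\<in>#M1. lroot D = lroot C" if "D \<in># M2" for D
  proof -
    have "(a, lroot D) \<in> edges (LNode a M2)" using that by auto
    then have "(a, lroot D) \<in> edges (LNode a M1)" unfolding E by simp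
    then obtain C where C: "C \<in># M1" "(a, lroot D) = (a, lroot C) \<or> (a, lroot D) \<in> edges C" by auto
    have "a \<notin># labels C" using ldist_child(2)[OF d1 C(1)] .
    then have "(a, lroot D) \<notin> edges C" using edges_labels by blast
    then show ?thesis using C by auto
  qed
  have same: "C = D" if C: "C \<in># M1" and D: "D \<in># M2" and r: "lroot D = lroot C" for C D
  proof -
    have "set_mset (labels C) = set_mset (labels D)"
      using reach_child[OF d1 C] reach_child[OF d2 D] E r by simp
    note L = this
    have "edges C = {e \<in> edges (LNode a M1). fst e \<in># labels C}" by (rule localize[OF d1 C])
    also have "\<dots> = {e \<in> edges (LNode a M2). fst e \<in># labels D}" unfolding E L ..
    also have "\<dots> = edges D" by (rule localize[OF d2 D, symmetric])
    finally have "edges C = edges D" .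
    then show ?thesis using LNode.IH[OF C ldist_child(1)[OF d1 C] ldist_child(1)[OF d2 D]] r by simp
  qed
  have setq: "set_mset M1 = set_mset M2"
  proof
    show "set_mset M1 \<subseteq> set_mset M2" using match same by blast
    show "set_mset M2 \<subseteq> set_mset M1" using match2 same by fastforce
  qed
  have cnt: "count M1 C \<le> 1" "count M2 C \<le> 1" for C
    using ldist_child_count[OF d1] ldist_child_count[OF d2] by auto
  have "M1 = M2"
  proof (rule multiset_eqI)
    fix C
    have "count M1 C > 0 \<longleftrightarrow> count M2 C > 0" using setq by simp
    then show "count M1 C = count M2 C" using cnt[of C] by linarith
  qed
  then show ?case using T2 ab by simp
qed

lemma prod_shift_fact: "(\<Prod>j\<in>{2..k}. (j - 1)) = fact (k - 1)"
proof (induction k)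
  case 0 then show ?case by simp
next
  case (Suc k)
  show ?case
  proof (cases "k = 0")
    case True then show ?thesis by simp
  next
    case False
    then have "{2..Suc k} = insert (Suc k) {2..k}" by auto
    then have "(\<Prod>j\<in>{2..Suc k}. (j - 1)) = k * (\<Prod>j\<in>{2..k}. (j - 1))" by simp
    also have "\<dots> = k * fact (k - 1)" using Suc by simp
    also have "\<dots> = fact k" using False by (simp add: fact_reduce[of k])
    finally show ?thesis by simp
  qed
qed

definition pfun :: "nat \<Rightarrow> ltree \<Rightarrow> nat \<Rightarrow> nat" where
  "pfun k T = restrict (\<lambda>j. THE i. (i,j) \<in> edges T) {2..k}"

lemma U_props:
  assumes "k \<ge> 1" "increasing T" "labels T = mset_set {1..k}"
  shows "ldist T" "lroot T = 1" "edges T = {(i,j). j \<in> {2..k} \<and> i = pfun k T j}"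
    "pfun k T \<in> (\<Pi>\<^sub>E j\<in>{2..k}. {1..<j})"
proof -
  show d: "ldist T" unfolding ldist_def assms(3) by (simp add: count_mset_set')
  have "lroot T \<in> {1..k}" using lroot_in_labels[of T] assms(3) by simp
  moreover have "lroot T \<le> 1" using incr_root_min[OF assms(2)] assms(1,3) by simp
  ultimately show r: "lroot T = 1" by simp
  have par: "(THE i. (i,j) \<in> edges T, j) \<in> edges T" if "j \<in> {2..k}" for j
  proof -
    have "j \<in># labels T" "j \<noteq> lroot T" using that assms(3) r by auto
    then obtain x where "(x,j) \<in> edges T" using has_parent by blast
    then have "(THE i. (i,j) \<in> edges T) = x" using unique_parent[OF d] by blast
    then show ?thesis using \<open>(x,j) \<in> edges T\<close> by simp
  qed
  show "edges T = {(i,j). j \<in> {2..k} \<and> i = pfun k T j}"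
  proof
    show "edges T \<subseteq> {(i,j). j \<in> {2..k} \<and> i = pfun k T j}"
    proof
      fix e assume e: "e \<in> edges T"
      obtain i j where ij: "e = (i,j)" by (cases e)
      have "j \<in># labels T" "j \<noteq> 1" using edges_labels[of i j T] edge_not_root[OF d, of i j] e ij r by auto
      then have j: "j \<in> {2..k}" using assms(3) by auto
      have "i = pfun k T j" using unique_parent[OF d, of i j] par[OF j] e ij j unfolding pfun_def by auto
      then show "e \<in> {(i,j). j \<in> {2..k} \<and> i = pfun k T j}" using ij j by simp
    qed
    show "{(i,j). j \<in> {2..k} \<and> i = pfun k T j} \<subseteq> edges T"
      using par unfolding pfun_def by auto
  qed
  show "pfun k T \<in> (\<Pi>\<^sub>E j\<in>{2..k}. {1..<j})"
  proof -
    have "pfun k T j \<in> {1..<j}" if j: "j \<in> {2..k}" for j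
    proof -
      have e: "(pfun k T j, j) \<in> edges T" using par[OF j] j unfolding pfun_def by simp
      have "pfun k T j \<in># labels T" using edges_labels[OF e] by simp
      then have "pfun k T j \<ge> 1" using assms(3) by simp
      moreover have "pfun k T j < j" using incr_edge[OF assms(2) e] .
      ultimately show ?thesis by simp
    qed
    then show ?thesis unfolding pfun_def by auto
  qed
qed

lemma U_bound:
  assumes "k \<ge> 1"
  shows "finite {T. increasing T \<and> labels T = mset_set {1..k}}"
    "card {T. increasing T \<and> labels T = mset_set {1..k}} \<le> fact (k - 1)"
proof -
  let ?U = "{T. increasing T \<and> labels T = mset_set {1..k}}"
  let ?P = "(\<Pi>\<^sub>E j\<in>{2..k}. {1..<j})"
  have inj: "inj_on (pfun k) ?U"
  proof (rule inj_onI)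
    fix T1 T2 assume T1: "T1 \<in> ?U" and T2: "T2 \<in> ?U" and eq: "pfun k T1 = pfun k T2"
    show "T1 = T2"
      using tree_unique[OF U_props(1)[OF assms, of T1] U_props(1)[OF assms, of T2]]
        U_props(2,3)[OF assms, of T1] U_props(2,3)[OF assms, of T2] T1 T2 eq by auto
  qed
  have sub: "pfun k ` ?U \<subseteq> ?P" using U_props(4)[OF assms] by auto
  have fP: "finite ?P" by (simp add: finite_PiE)
  show "finite ?U" using finite_imageD[OF finite_subset[OF sub fP] inj] .
  have "card ?U = card (pfun k ` ?U)" using card_image[OF inj] by simp
  also have "\<dots> \<le> card ?P" using card_mono[OF fP sub] .
  also have "\<dots> = (\<Prod>j\<in>{2..k}. (j - 1))" by (simp add: card_PiE)
  also have "\<dots> = fact (k - 1)" by (rule prod_shift_fact)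
  finally show "card ?U \<le> fact (k - 1)" .
qed

lemma exists_list:
  "(\<forall>x\<in>set xs. \<forall>n. \<exists>T. shape T = x \<and> increasing T \<and> labels T = mset_set {n..<n + psize x} \<and> lroot T = n)
   \<Longrightarrow> \<exists>Ts. map shape Ts = xs \<and> (\<forall>T\<in>set Ts. increasing T \<and> n \<le> lroot T) \<and>
        sum_list (map labels Ts) = mset_set {n..<n + sum_list (map psize xs)}"
proof (induction xs arbitrary: n)
  case Nil then show ?case by simp
next
  case (Cons x xs)
  obtain T where T: "shape T = x" "increasing T" "labels T = mset_set {n..<n + psize x}" "lroot T = n"
    using Cons.prems by auto
  obtain Ts where Ts: "map shape Ts = xs" "\<forall>T\<in>set Ts. increasing T \<and> n + psize x \<le> lroot T"
    "sum_list (map labels Ts) = mset_set {n + psize x..<n + psize x + sum_list (map psize xs)}"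
    using Cons.IH[of "n + psize x"] Cons.prems by auto
  have "mset_set {n..<n + psize x} + mset_set {n + psize x..<n + psize x + sum_list (map psize xs)}
     = mset_set ({n..<n + psize x} \<union> {n + psize x..<n + psize x + sum_list (map psize xs)})"
    by (rule mset_set_Union[symmetric]) auto
  also have "{n..<n + psize x} \<union> {n + psize x..<n + psize x + sum_list (map psize xs)} =
     {n..<n + sum_list (map psize (x # xs))}" by auto
  finally have "sum_list (map labels (T # Ts)) = mset_set {n..<n + sum_list (map psize (x # xs))}"
    using T Ts by simp
  moreover have "map shape (T # Ts) = x # xs" using T Ts by simp
  moreover have "\<forall>T\<in>set (T # Ts). increasing T \<and> n \<le> lroot T" using T Ts by auto
  ultimately show ?case by - (rule exI[where x="T # Ts"], intro conjI; assumption)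
qed

lemma exists_lab:
  "\<exists>T. shape T = t \<and> increasing T \<and> labels T = mset_set {n..<n + psize t} \<and> lroot T = n"
proof (induction t arbitrary: n)
  case (PNode M)
  obtain xs where xs: "mset xs = M" using ex_mset by blast
  obtain Ts where Ts: "map shape Ts = xs" "\<forall>T\<in>set Ts. increasing T \<and> Suc n \<le> lroot T"
    "sum_list (map labels Ts) = mset_set {Suc n..<Suc n + sum_list (map psize xs)}"
    using exists_list[of xs "Suc n"] PNode.IH xs by auto
  let ?T = "LNode n (mset Ts)"
  have "shape ?T = PNode M" using Ts(1) xs by (simp flip: mset_map)
  moreover have "increasing ?T" using Ts(2) by auto
  moreover have "labels ?T = mset_set {n..<n + psize (PNode M)}"
  proof -
    have "labels ?T = add_mset n (sum_list (map labels Ts))"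
      by (simp flip: mset_map add: sum_mset_sum_list)
    also have "\<dots> = add_mset n (mset_set {Suc n..<Suc n + sum_list (map psize xs)})" using Ts(3) by simp
    also have "\<dots> = mset_set (insert n {Suc n..<Suc n + sum_list (map psize xs)})"
      by simp
    also have "insert n {Suc n..<Suc n + sum_list (map psize xs)} = {n..<Suc n + sum_list (map psize xs)}"
      by auto
    finally have L: "labels ?T = mset_set {n..<Suc n + sum_list (map psize xs)}" .
    have im: "image_mset psize M = mset (map psize xs)" using xs by auto
    have "sum_mset (image_mset psize M) = sum_list (map psize xs)"
      unfolding im by (rule sum_mset_sum_list)
    then have P: "psize (PNode M) = Suc (sum_list (map psize xs))" by simp
    show ?thesis using L P by simp
  qed
  moreover have "lroot ?T = n" by simp
  ultimately show ?case by blast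
qed

lemma num_bounds: "1 \<le> num_incr_labellings t" "num_incr_labellings t \<le> fact (psize t - 1)"
proof -
  have k: "psize t \<ge> 1" by (cases t) simp
  let ?S = "{T. shape T = t \<and> increasing T \<and> labels T = mset_set {1..psize t}}"
  let ?U = "{T. increasing T \<and> labels T = mset_set {1..psize t}}"
  have sub: "?S \<subseteq> ?U" by auto
  have fin: "finite ?S" using finite_subset[OF sub U_bound(1)[OF k]] .
  obtain T where "shape T = t" "increasing T" "labels T = mset_set {1..<1 + psize t}"
    using exists_lab by blast
  then have "T \<in> ?S" by (simp add: atLeastLessThanSuc_atLeastAtMost)
  then have "card ?S > 0" using fin card_gt_0_iff by blast
  then have "card ?S \<ge> 1" by simp
  then show "1 \<le> num_incr_labellings t" unfolding num_incr_labellings_def .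
  have "card ?S \<le> card ?U" using card_mono[OF U_bound(1)[OF k] sub] .
  then show "num_incr_labellings t \<le> fact (psize t - 1)" unfolding num_incr_labellings_def
    using U_bound(2)[OF k] by (rule le_trans)
qed

lemma ratio_aux:
  fixes N F FK k :: real
  assumes "N \<le> F" "FK = k * F" "k > 0" "F > 0"
  shows "N / FK \<le> 1 / k"
proof -
  have "N / FK = N / (k * F)" using assms(2) by simp
  also have "\<dots> \<le> F / (k * F)" using assms by (intro divide_right_mono) auto
  also have "\<dots> = 1 / k" using assms(4) by simp
  finally show ?thesis .
qed

lemma w_bounds: "0 < w t" "w t \<le> 1 / real (psize t)"
proof -
  have k: "psize t \<ge> 1" by (cases t) simp
  show "0 < w t" unfolding w_def using num_bounds(1)[of t] by simp
  have "real (num_incr_labellings t) \<le> real (fact (psize t - 1))"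
    using num_bounds(2)[of t] by (simp only: of_nat_le_iff)
  then have a: "real (num_incr_labellings t) \<le> fact (psize t - 1)" by (simp only: of_nat_fact)
  have b: "(fact (psize t) :: real) = real (psize t) * fact (psize t - 1)"
    using k by (intro fact_reduce) simp
  have c: "real (psize t) > 0" using k by simp
  have d: "(fact (psize t - 1) :: real) > 0" by simp
  show "w t \<le> 1 / real (psize t)" unfolding w_def by (rule ratio_aux[OF a b c d])
qed



lemma poly_int:
  fixes c :: real and k :: nat
  shows "((\<lambda>v. 1 - c * v ^ k) has_integral (1 - c / real (Suc k))) {0..1}"
proof -
  have "((\<lambda>v. 1 - c * v ^ k) has_integral
         ((\<lambda>v. v - c * v ^ Suc k / real (Suc k)) 1 - (\<lambda>v. v - c * v ^ Suc k / real (Suc k)) 0)) {0..1}"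
  proof (rule fundamental_theorem_of_calculus)
    fix x :: real
    have "((\<lambda>v. v - c * v ^ Suc k / real (Suc k)) has_real_derivative (1 - c * x ^ k)) (at x within {0..1})"
      apply (auto intro!: derivative_eq_intros simp del: of_nat_Suc)
      apply (cases k)
       apply (simp_all add: field_simps)
      done
    then show "((\<lambda>v. v - c * v ^ Suc k / real (Suc k)) has_vector_derivative (1 - c * x ^ k)) (at x within {0..1})"
      by (simp add: has_real_derivative_iff_has_vector_derivative)
  qed simp
  then show ?thesis by simp
qed

lemma exp_upper_aux:
  fixes x a :: real
  assumes "0 \<le> x" "x \<le> a"
  shows "exp (- x) \<le> 1 - x * exp (- a)"
proof -
  have "1 + x \<le> exp x" by (rule exp_ge_add_one_self)
  then have "exp (-x) * (1 + x) \<le> exp (-x) * exp x" by (simp add: mult_left_mono)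
  then have "exp (-x) + x * exp (-x) \<le> 1" by (simp add: algebra_simps exp_minus_inverse)
  moreover have "x * exp (-a) \<le> x * exp (-x)" using assms by (simp add: mult_left_mono)
  ultimately show ?thesis by linarith
qed

lemma exp_lower_aux: "1 - (x::real) \<le> exp (- x)"
  using exp_ge_add_one_self[of "-x"] by simp

lemma analytic:
  fixes a :: real and k :: nat
  assumes a0: "0 < a" and ak: "a \<le> 1 / real k" and k20: "k \<ge> 20"
  shows "(\<exists>r>0. integral {0..r} (\<lambda>v. exp (- a * v ^ k)) = 1) \<and>
    \<bar>(Inf {r. r > 0 \<and> integral {0..r} (\<lambda>v. exp (- a * v ^ k)) = 1} - 1) / (a / real k) - 1\<bar> \<le> 3 / real k"
proof -
  define f where "f = (\<lambda>v::real. exp (- a * v ^ k))"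
  define F where "F = (\<lambda>r. integral {0..r} f)"
  have kpos: "real k \<ge> 20" using k20 by simp
  have "1 / real k \<le> 1 / 20" using kpos by (intro divide_left_mono) auto
  then have a20: "a \<le> 1/20" using ak by linarith
  have cont: "continuous_on S f" for S unfolding f_def by (intro continuous_intros)
  have intg: "f integrable_on {r..s}" for r s by (rule integrable_continuous_real[OF cont])
  have comb: "F s = F r + integral {r..s} f" if "0 \<le> r" "r \<le> s" for r s
    unfolding F_def using Henstock_Kurzweil_Integration.integral_combine[OF that intg] by simp
  have lowI: "integral {r..s} f \<ge> (s - r) * exp (- a * s ^ k)" if "0 \<le> r" "r \<le> s" for r s
  proof -
    have "integral {r..s} (\<lambda>_. exp (- a * s ^ k)) \<le> integral {r..s} f"
    proof (rule integral_le)
      show "(\<lambda>_. exp (- a * s ^ k)) integrable_on {r..s}" by (intro integrable_continuous_real continuous_intros)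
      show "f integrable_on {r..s}" by (rule intg)
      fix v assume "v \<in> {r..s}"
      then have "v ^ k \<le> s ^ k" using that by (intro power_mono) auto
      then show "exp (- a * s ^ k) \<le> f v" unfolding f_def using a0 by simp
    qed
    then show ?thesis using that by simp
  qed
  have upI: "integral {r..s} f \<le> s - r" if "0 \<le> r" "r \<le> s" for r s
  proof -
    have "integral {r..s} f \<le> integral {r..s} (\<lambda>_. 1::real)"
    proof (rule integral_le)
      show "(\<lambda>_. 1::real) integrable_on {r..s}" by (intro integrable_continuous_real continuous_intros)
      show "f integrable_on {r..s}" by (rule intg)
      fix v assume "v \<in> {r..s}"
      then have "0 \<le> v ^ k" using that by simp
      then show "f v \<le> 1" unfolding f_def using a0 by simp
    qed
    then show ?thesis using that by simp
  qed
  have mono: "F r < F s" if "0 \<le> r" "r < s" for r s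
  proof -
    have p: "0 < (s - r) * exp (- a * s ^ k)" using that by simp
    have l: "integral {r..s} f \<ge> (s - r) * exp (- a * s ^ k)" using lowI[of r s] that by simp
    have c: "F s = F r + integral {r..s} f" using comb[of r s] that by simp
    show ?thesis using p l c by linarith
  qed
  have F1u: "F 1 \<le> 1 - a * (1 - a) / real (Suc k)"
  proof -
    have "F 1 \<le> integral {0..1} (\<lambda>v. 1 - (a * exp (- a)) * v ^ k)"
      unfolding F_def
    proof (rule integral_le)
      show "f integrable_on {0..1}" by (rule intg)
      show "(\<lambda>v. 1 - (a * exp (- a)) * v ^ k) integrable_on {0..1}" using poly_int by blast
      fix v :: real assume v: "v \<in> {0..1}"
      then have "v ^ k \<le> 1" by (simp add: power_le_one)
      then have "a * v ^ k \<le> a" using a0 by (simp add: mult_left_le)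
      moreover have "0 \<le> a * v ^ k" using a0 v by simp
      ultimately show "f v \<le> 1 - (a * exp (- a)) * v ^ k"
        unfolding f_def using exp_upper_aux[of "a * v ^ k" a] by (simp add: algebra_simps)
    qed
    also have "\<dots> = 1 - a * exp (- a) / real (Suc k)" using poly_int integral_unique by blast
    also have "\<dots> \<le> 1 - a * (1 - a) / real (Suc k)"
      using exp_lower_aux[of a] a0 by (simp add: divide_right_mono)
    finally show ?thesis .
  qed
  have F1l: "F 1 \<ge> 1 - a / real (Suc k)"
  proof -
    have "integral {0..1} (\<lambda>v. 1 - a * v ^ k) \<le> F 1"
      unfolding F_def
    proof (rule integral_le)
      show "f integrable_on {0..1}" by (rule intg)
      show "(\<lambda>v. 1 - a * v ^ k) integrable_on {0..1}" using poly_int by blast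
      fix v :: real assume v: "v \<in> {0..1}"
      show "1 - a * v ^ k \<le> f v" unfolding f_def using exp_lower_aux[of "a * v ^ k"] by simp
    qed
    moreover have "integral {0..1} (\<lambda>v. 1 - a * v ^ k) = 1 - a / real (Suc k)"
      using poly_int integral_unique by blast
    ultimately show ?thesis by simp
  qed
  have F1lt: "F 1 < 1"
  proof -
    have "0 < a * (1 - a) / real (Suc k)" using a0 a20 by simp
    then show ?thesis using F1u by linarith
  qed
  define R where "R = 1 + 2 * a / real k"
  have R1: "R > 1" unfolding R_def using a0 kpos by simp
  have Rk: "R ^ k \<le> 2"
  proof -
    have "R ^ k \<le> exp (2 * a / real k) ^ k" unfolding R_def
      using exp_ge_add_one_self[of "2 * a / real k"] a0 by (intro power_mono) auto
    also have "\<dots> = exp (2 * a)" using kpos by (simp add: exp_of_nat_mult[symmetric])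
    also have "\<dots> \<le> 2"
    proof -
      have "1 - 2 * a \<le> exp (- (2 * a))" by (rule exp_lower_aux)
      then have "exp (2 * a) * (1 - 2 * a) \<le> exp (2 * a) * exp (- (2 * a))"
        by (simp add: mult_left_mono)
      then have "exp (2 * a) * (1 - 2 * a) \<le> 1" by (simp add: exp_minus_inverse)
      moreover have "exp (2 * a) * (1/2) \<le> exp (2 * a) * (1 - 2 * a)" using a20 by (intro mult_left_mono) auto
      ultimately show ?thesis by linarith
    qed
    finally show ?thesis .
  qed
  have expR: "exp (- a * r ^ k) \<ge> 1 - 2 * a" if "0 \<le> r" "r \<le> R" for r
  proof -
    have "r ^ k \<le> R ^ k" using that by (intro power_mono) auto
    then have "r ^ k \<le> 2" using Rk by linarith
    then have "a * r ^ k \<le> a * 2" using a0 by (intro mult_left_mono) auto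
    then have "a * r ^ k \<le> 2 * a" by simp
    then show ?thesis using exp_lower_aux[of "a * r ^ k"] by simp
  qed
  have FR: "F R > 1"
  proof -
    have "integral {1..R} f \<ge> (R - 1) * (1 - 2 * a)"
    proof -
      have "(R - 1) * (1 - 2 * a) \<le> (R - 1) * exp (- a * R ^ k)" using R1 expR[of R] by (intro mult_left_mono) auto
      moreover have "integral {1..R} f \<ge> (R - 1) * exp (- a * R ^ k)" using lowI[of 1 R] R1 by simp
      ultimately show ?thesis by linarith
    qed
    moreover have "(R - 1) * (1 - 2 * a) > a / real (Suc k)"
    proof -
      have "(R - 1) * (1 - 2 * a) = 2 * a * (1 - 2 * a) / real k" unfolding R_def by simp
      moreover have "2 * a * (1 - 2 * a) / real k > a / real (Suc k)"
      proof -
        have h1: "(9/5) / real k > 1 / real (Suc k)" using kpos by (simp add: field_simps)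
        have "a * (1 / real (Suc k)) < a * ((9/5) / real k)" using a0 h1 by (intro mult_strict_left_mono) auto
        moreover have "a * ((9/5) / real k) \<le> a * (2 * (1 - 2 * a) / real k)"
          using a0 a20 kpos by (intro mult_left_mono divide_right_mono) auto
        moreover have "a * (2 * (1 - 2 * a) / real k) = 2 * a * (1 - 2 * a) / real k" by simp
        moreover have "a * (1 / real (Suc k)) = a / real (Suc k)" by simp
        ultimately show ?thesis by linarith
      qed
      ultimately show ?thesis by simp
    qed
    ultimately show ?thesis using comb[of 1 R] R1 F1l by simp
  qed
  have contF: "continuous_on {1..R} F"
  proof -
    have "continuous_on {0..R} F" unfolding F_def by (rule indefinite_integral_continuous_1[OF intg])
    then show ?thesis by (rule continuous_on_subset) auto
  qed
  obtain \<rho> where rho: "1 \<le> \<rho>" "\<rho> \<le> R" "F \<rho> = 1"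
    using IVT'[of F 1 1 R, OF _ _ _ contF] F1lt FR R1 by auto
  have rho1: "1 < \<rho>" using rho F1lt by (cases "\<rho> = 1") auto
  have rhoR: "\<rho> < R" using rho FR by (cases "\<rho> = R") auto
  have S: "{r. r > 0 \<and> F r = 1} = {\<rho>}"
  proof -
    have "r = \<rho>" if "r > 0" "F r = 1" for r
    proof (rule ccontr)
      assume "r \<noteq> \<rho>"
      then have "r < \<rho> \<or> \<rho> < r" by auto
      then show False using mono[of r \<rho>] mono[of \<rho> r] that rho rho1 by auto
    qed
    then show ?thesis using rho rho1 by auto
  qed
  define e where "e = \<rho> - 1"
  have G: "integral {1..\<rho>} f = 1 - F 1" using comb[of 1 \<rho>] rho by simp
  have Gu: "integral {1..\<rho>} f \<le> e" using upI[of 1 \<rho>] rho unfolding e_def by simp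
  have Gl: "integral {1..\<rho>} f \<ge> e * (1 - 2 * a)"
  proof -
    have "(\<rho> - 1) * (1 - 2 * a) \<le> (\<rho> - 1) * exp (- a * \<rho> ^ k)" using rho expR[of \<rho>] by (intro mult_left_mono) auto
    moreover have "integral {1..\<rho>} f \<ge> (\<rho> - 1) * exp (- a * \<rho> ^ k)" using lowI[of 1 \<rho>] rho by simp
    ultimately show ?thesis unfolding e_def by linarith
  qed
  have e_low: "e \<ge> a * (1 - a) / real (Suc k)" using G Gu F1u by linarith
  have e_up: "e * (1 - 2 * a) \<le> a / real (Suc k)" using G Gl F1l by linarith
  have q: "(\<rho> - 1) / (a / real k) = e * real k / a" unfolding e_def using a0 kpos by simp
  have ql: "e * real k / a \<ge> 1 - 3 / real k"
  proof -
    have "e * real k / a \<ge> (1 - a) * real k / real (Suc k)"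
    proof -
      have "a * (1 - a) / real (Suc k) * real k \<le> e * real k" using e_low by (intro mult_right_mono) auto
      then have "a * (1 - a) / real (Suc k) * real k / a \<le> e * real k / a" using a0 by (intro divide_right_mono) auto
      moreover have "a * (1 - a) / real (Suc k) * real k / a = (1 - a) * real k / real (Suc k)" using a0 by simp
      ultimately show ?thesis by simp
    qed
    moreover have "(1 - a) * real k / real (Suc k) \<ge> 1 - 3 / real k"
    proof -
      have "(1 - a) * real k \<ge> real k - 1" using ak kpos by (simp add: field_simps)
      then have "(real k - 1) / (real k + 1) \<le> (1 - a) * real k / (real k + 1)"
        by (intro divide_right_mono) auto
      then have "(1 - a) * real k / real (Suc k) \<ge> (real k - 1) / (real k + 1)"
        by (simp add: add.commute)
      moreover have "(real k - 1) / (real k + 1) \<ge> 1 - 3 / real k" using kpos by (simp add: field_simps)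
      ultimately show ?thesis by linarith
    qed
    ultimately show ?thesis by linarith
  qed
  have qu: "e * real k / a \<le> 1 + 3 / real k"
  proof -
    have b: "1 - 2 * a \<ge> (real k - 2) / real k" using ak kpos by (simp add: field_simps)
    have pos: "(real k - 2) / real k > 0" using kpos by simp
    have "e * ((real k - 2) / real k) \<le> a / real (Suc k)"
    proof -
      have "e * ((real k - 2) / real k) \<le> e * (1 - 2 * a)" using b rho1 unfolding e_def by (intro mult_left_mono) auto
      then show ?thesis using e_up by linarith
    qed
    then have e1: "e \<le> a / real (Suc k) / ((real k - 2) / real k)" using pos_le_divide_eq[OF pos] by blast
    have e2: "a / real (Suc k) / ((real k - 2) / real k) = a * real k / ((real k + 1) * (real k - 2))"
      using kpos by (simp add: field_simps)
    have "e * real k / a \<le> (a * real k / ((real k + 1) * (real k - 2))) * real k / a"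
      using e1 e2 a0 kpos by (intro divide_right_mono mult_right_mono) (auto simp: add.commute)
    also have "\<dots> = real k * real k / ((real k + 1) * (real k - 2))" using a0 by simp
    finally have "e * real k / a \<le> real k * real k / ((real k + 1) * (real k - 2))" .
    also have "\<dots> \<le> 1 + 3 / real k"
    proof -
      have kk: "real k * real k \<ge> 20 * real k" using kpos by (intro mult_right_mono) auto
      have "(real k + 3) * ((real k + 1) * (real k - 2)) = real k * real k * real k + 2 * (real k * real k) - 5 * real k - 6"
        by (simp add: algebra_simps)
      then have poly: "real k * real k * real k \<le> (real k + 3) * ((real k + 1) * (real k - 2))" using kk kpos by linarith
      show ?thesis using poly kpos by (simp add: field_simps)
    qed
    finally show ?thesis .
  qed
  have ex: "\<exists>r>0. F r = 1" using rho(3) less_trans[OF zero_less_one rho1] by blast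
  have inf: "Inf {r. r > 0 \<and> F r = 1} = \<rho>" using S by simp
  have ab: "\<bar>(\<rho> - 1) / (a / real k) - 1\<bar> \<le> 3 / real k" unfolding q abs_le_iff using ql qu by linarith
  have final: "(\<exists>r>0. F r = 1) \<and> \<bar>(Inf {r. r > 0 \<and> F r = 1} - 1) / (a / real k) - 1\<bar> \<le> 3 / real k"
    using ex ab unfolding inf by blast
  then show ?thesis unfolding F_def f_def .
qed


theorem corollary2p2:
  shows "\<forall>e>0. \<exists>K. \<forall>t. psize t \<ge> K \<longrightarrow>
    (\<exists>r>0. integral {0..r} (\<lambda>v. exp (- w t * v ^ psize t)) = 1) \<and>
    \<bar>(rho_tilde t - 1) / (w t / real (psize t)) - 1\<bar> < e"
proof (intro allI impI)
  fix e :: real assume e: "e > 0"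
  define K where "K = max 20 (nat \<lceil>3 / e\<rceil> + 1)"
  show "\<exists>K. \<forall>t. psize t \<ge> K \<longrightarrow>
    (\<exists>r>0. integral {0..r} (\<lambda>v. exp (- w t * v ^ psize t)) = 1) \<and>
    \<bar>(rho_tilde t - 1) / (w t / real (psize t)) - 1\<bar> < e"
  proof (intro exI allI impI)
    fix t assume tK: "psize t \<ge> K"
    have k20: "psize t \<ge> 20" using tK unfolding K_def by simp
    have kb: "real (psize t) > 3 / e"
    proof -
      have "psize t \<ge> nat \<lceil>3 / e\<rceil> + 1" using tK unfolding K_def by simp
      then have "real (psize t) \<ge> real (nat \<lceil>3 / e\<rceil>) + 1" by simp
      moreover have "real (nat \<lceil>3 / e\<rceil>) \<ge> 3 / e" by linarith
      ultimately show ?thesis by linarith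
    qed
    have kpos: "real (psize t) > 0" using k20 by simp
    have small: "3 / real (psize t) < e"
      using kb e kpos by (simp add: field_simps)
    have A: "(\<exists>r>0. integral {0..r} (\<lambda>v. exp (- w t * v ^ psize t)) = 1) \<and>
      \<bar>(Inf {r. r > 0 \<and> integral {0..r} (\<lambda>v. exp (- w t * v ^ psize t)) = 1} - 1) / (w t / real (psize t)) - 1\<bar>
        \<le> 3 / real (psize t)"
      by (rule analytic[OF w_bounds(1) w_bounds(2) k20])
    show "(\<exists>r>0. integral {0..r} (\<lambda>v. exp (- w t * v ^ psize t)) = 1) \<and>
    \<bar>(rho_tilde t - 1) / (w t / real (psize t)) - 1\<bar> < e"
      unfolding rho_tilde_def using conjunct1[OF A] order_le_less_trans[OF conjunct2[OF A] small] by blast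
  qed
qed

end
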